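(* Let $P,Q$ be integers with $PQ\ne0$, $\gcd(P,Q)=1$ and $\Delta:=P^2-4Q>0$, let $\alpha,\beta$ be the roots of $x^2-Px+Q$ with $|\alpha|\ge|\beta|$, and assume $\alpha/\beta$ is not a root of unity. Let $U_n=(\alpha^n-\beta^n)/(\alpha-\beta)$. Then for all positive integers $m,\ell$ with $m\ge\ell$, \[\left|U_\ell\binom{m}{\ell}_{\boldsymbol U}\right|\ge|\alpha|^{\ell(m-\ell-1)-1}.\]
   Context: $U_0=0,U_1=1,U_{n+2}=PU_{n+1}-QU_n$. For $m\ge\ell\ge1$, $\binom{m}{\ell}_{\boldsymbol U}:=\frac{U_mU_{m-1}\cdots U_{m-\ell+1}}{U_1U_2\cdots U_\ell}$. *)

theory Defs
  imports Complex_Main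
begin

fun lucasU :: "int \<Rightarrow> int \<Rightarrow> nat \<Rightarrow> int" where
  "lucasU P Q 0 = 0"
| "lucasU P Q (Suc 0) = 1"
| "lucasU P Q (Suc (Suc n)) = P * lucasU P Q (Suc n) - Q * lucasU P Q n"

definition lucas_binom :: "int \<Rightarrow> int \<Rightarrow> nat \<Rightarrow> nat \<Rightarrow> real" where
  "lucas_binom P Q m l =
     (\<Prod>i<l. real_of_int (lucasU P Q (m - i))) / (\<Prod>i=1..l. real_of_int (lucasU P Q i))"

end

theory Submission
  imports Defs
begin


lemma lucas_binet:
  fixes alpha beta :: real
  assumes "alpha + beta = real_of_int P" "alpha * beta = real_of_int Q"
  shows "real_of_int (lucasU P Q n) * (alpha - beta) = alpha^n - beta^n"
proof -
  have "real_of_int (lucasU P Q n) * (alpha - beta) = alpha^n - beta^n \<and>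
        real_of_int (lucasU P Q (Suc n)) * (alpha - beta) = alpha^Suc n - beta^Suc n"
  proof (induction n)
    case 0 then show ?case by simp
  next
    case (Suc n)
    have "real_of_int (lucasU P Q (Suc (Suc n))) * (alpha - beta)
        = (alpha + beta) * (real_of_int (lucasU P Q (Suc n)) * (alpha - beta))
          - (alpha*beta) * (real_of_int (lucasU P Q n) * (alpha - beta))"
      using assms by (simp add: algebra_simps)
    also have "\<dots> = alpha ^ Suc (Suc n) - beta ^ Suc (Suc n)"
      by (simp only: conjunct1[OF Suc.IH] conjunct2[OF Suc.IH]) (simp add: algebra_simps)
    finally have h: "real_of_int (lucasU P Q (Suc (Suc n))) * (alpha - beta) = alpha ^ Suc (Suc n) - beta ^ Suc (Suc n)" .
    show ?case using conjunct2[OF Suc.IH] h by blast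
  qed
  thus ?thesis by simp
qed

lemma core_pos:
  fixes x y D :: real and n :: nat
  assumes "y > 0" "y < x" "n \<ge> 1" "D*(x-y) = x^n - y^n" "x - y \<ge> 1"
  shows "x ^ (n - 1) \<le> D \<and> D \<le> x ^ n"
proof
  have yx: "y ^ (n-1) \<le> x ^ (n-1)" using assms by (intro power_mono) auto
  have "x^n = x^(n-1) * x" "y^n = y^(n-1)*y" using assms(3)
    using assms(3) by (cases n; simp)+
  hence "x^n - y^n \<ge> x^(n-1) * (x - y)" using yx assms(1) mult_right_mono[OF yx, of y]
    by (simp add: algebra_simps)
  hence "D * (x-y) \<ge> x^(n-1) * (x-y)" using assms by simp
  moreover have "x - y > 0" using assms by simp
  ultimately show "x ^ (n - 1) \<le> D" using mult_le_cancel_right_pos by blast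
  have "D*(x-y) \<le> x^n" using assms by simp
  moreover have "D \<ge> 0" proof -
    have "0 < x^(n-1)" using assms by simp
    thus ?thesis using \<open>x^(n-1) \<le> D\<close> by linarith
  qed
  moreover have "D * 1 \<le> D * (x-y)" using assms(5) \<open>D \<ge> 0\<close> by (rule mult_left_mono)
  ultimately show "D \<le> x ^ n" by linarith
qed

lemma core_neg:
  fixes x b D :: real and n :: nat
  assumes "b > 0" "b < x" "n \<ge> 2" "D*(x+b) = x^n - (-b)^n" "x - b \<ge> 1"
  shows "x ^ (n - 2) \<le> D \<and> D \<le> x ^ (n - 1)"
proof
  obtain k where k: "n = k + 2" using assms(3) by (metis add.commute le_add_diff_inverse)
  have bx: "b ^ k \<le> x ^ k" using assms by (intro power_mono) auto
  have ab: "\<bar>(-b)^n\<bar> = b^n" using assms by (simp add: power_abs)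
  have "(-b)^n \<le> b^n" using ab by linarith
  have "b^n = b^k * b^2" "x^n = x^k*x^2" using k by (simp_all add: power_add power2_eq_square)
  hence "x^n - b^n \<ge> x^k * (x^2 - b^2)" using mult_right_mono[OF bx, of "b^2"]
    by (simp add: algebra_simps)
  moreover have "x^2 - b^2 = (x-b)*(x+b)" by (simp add: algebra_simps power2_eq_square)
  moreover have "(x-b)*(x+b) \<ge> x + b" using assms by (simp add: mult_le_cancel_right1)
  ultimately have "x^k * (x+b) \<le> x^k * (x^2 - b^2)"
    using assms by (intro mult_left_mono) auto
  hence "x^n - b^n \<ge> x^k * (x+b)" using \<open>x^n - b^n \<ge> x^k * (x^2 - b^2)\<close> by linarith
  hence "D * (x+b) \<ge> x^k * (x+b)" using assms(4) \<open>(-b)^n \<le> b^n\<close> by linarith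
  moreover have "x + b > 0" using assms by simp
  ultimately have "x ^ k \<le> D" using mult_le_cancel_right_pos by blast
  thus "x ^ (n - 2) \<le> D" using k by simp
  have bx1: "b ^ (n-1) \<le> x ^ (n-1)" using assms by (intro power_mono) auto
  have "(-b)^n \<ge> - (b^n)" using ab by linarith
  have "x^n = x^(n-1) * x" "b^n = b^(n-1)*b" using assms(3)
    using k by simp_all
  hence "x^n + b^n \<le> x^(n-1) * (x + b)" using mult_right_mono[OF bx1, of b] assms
    by (simp add: algebra_simps)
  hence "D * (x+b) \<le> x^(n-1) * (x+b)" using assms(4) \<open>(-b)^n \<ge> - (b^n)\<close> by linarith
  moreover have "x + b > 0" using assms by simp
  ultimately show "D \<le> x ^ (n - 1)" using mult_le_cancel_right_pos by blast
qed


lemma pos_case: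
  fixes x y D :: real and n :: nat and P Q :: int
  assumes "x > 0" "\<bar>y\<bar> < x" "Q \<noteq> 0" "x * y = of_int Q" "x + y = of_int P"
    "P^2 - 4*Q > 0" "n \<ge> 1" "D * (x - y) = x^n - y^n"
  shows "x > 1 \<and> x powi (int n - 1 - (if Q > 0 then 0 else 1)) \<le> \<bar>D\<bar>
         \<and> \<bar>D\<bar> \<le> x powi (int n - (if Q > 0 then 0 else 1))"
proof (cases "Q > 0")
  case True
  have y: "y > 0"
  proof (rule ccontr)
    assume "\<not> y > 0"
    hence "x * y \<le> 0" using assms(1) by (simp add: mult_nonneg_nonpos)
    thus False using True assms(4) by simp
  qed
  have sq: "(x-y)^2 = of_int (P^2 - 4*Q)"
  proof -
    have "(x-y)^2 = (x+y)^2 - 4*(x*y)" by (simp add: algebra_simps power2_eq_square)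
    also have "\<dots> = of_int (P^2 - 4*Q)" using assms(4,5) by simp
    finally show ?thesis .
  qed
  have "P^2 - 4*Q \<ge> 1" using assms(6) by simp
  hence "real_of_int (P^2 - 4*Q) \<ge> 1" by (metis of_int_1 of_int_le_iff)
  hence "(x-y)^2 \<ge> 1" using sq by linarith
  have xy: "x - y \<ge> 1"
  proof (rule ccontr)
    assume "\<not> x - y \<ge> 1"
    hence "(x-y)*(x-y) < 1*1" using assms y by (intro mult_strict_mono) auto
    thus False using \<open>(x-y)^2 \<ge> 1\<close> by (simp add: power2_eq_square)
  qed
  from core_pos[OF y _ assms(7,8) xy] have b: "x ^ (n - 1) \<le> D \<and> D \<le> x ^ n" using xy by simp
  have "0 < x^(n-1)" using assms(1) by simp
  hence "0 \<le> D" using b by linarith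
  moreover have "int n - 1 = int (n-1)" using assms(7) by simp
  ultimately show ?thesis using b True xy y
    by (simp del: of_nat_diff)
next
  case False
  hence Qn: "Q < 0" using assms(3) by simp
  define b where "b = - y"
  have bpos: "b > 0"
  proof (rule ccontr)
    assume "\<not> b > 0"
    hence "0 \<le> x * y" using assms(1) unfolding b_def by simp
    thus False using Qn assms(4) by simp
  qed
  have "x + y > 0" using assms(2) by (simp add: abs_less_iff)
  hence "real_of_int P > 0" using assms(5) by simp
  hence "P \<ge> 1" by simp
  hence xb: "x - b \<ge> 1" using assms(5) unfolding b_def by simp
  have x1: "x > 1" using xb bpos by simp
  have eq: "D * (x + b) = x^n - (-b)^n" using assms(8) unfolding b_def by simp
  show ?thesis
  proof (cases "n = 1")
    case True
    hence "D * (x + b) = 1 * (x + b)" using eq by simp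
    moreover have "x + b \<noteq> 0" using bpos assms(1) by simp
    ultimately have "D = 1" by (simp only: mult_cancel_right) simp
    then show ?thesis using True False x1 by (simp add: power_int_minus inverse_le_1_iff)
  next
    case n2: False
    hence "n \<ge> 2" using assms(7) by simp
    from core_neg[OF bpos _ this eq xb] have c: "x ^ (n - 2) \<le> D \<and> D \<le> x ^ (n - 1)"
      using assms(2) unfolding b_def by simp
    have "0 < x^(n-2)" using assms(1) by simp
    hence "0 \<le> D" using c by linarith
    moreover have "int n - 1 - 1 = int (n-2)" "int n - 1 = int (n-1)" using \<open>n \<ge> 2\<close> by simp_all
    ultimately show ?thesis using c False x1
      by (simp del: of_nat_diff)
  qed
qed

lemma my_abs_prod: "abs (prod f A :: real) = prod (\<lambda>x. abs (f x)) A"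
  by (cases "finite A", induction A rule: finite_induct) (simp_all add: abs_mult)

lemma prod_powi:
  fixes x :: real
  assumes "x \<noteq> 0"
  shows "(\<Prod>i\<in>A. x powi f i) = x powi (\<Sum>i\<in>A. f i)"
proof (cases "finite A")
  case True
  then show ?thesis
    by (induction A rule: finite_induct) (simp_all add: power_int_add assms)
qed simp

lemma gauss_int: "2 * (\<Sum>i<l. int i) = int l * (int l - 1)"
  by (induction l) (simp_all add: algebra_simps)

lemma U_bounds:
  fixes P Q :: int and alpha beta :: real and n :: nat
  assumes "P * Q \<noteq> 0" and "P^2 - 4 * Q > 0"
    and "alpha + beta = real_of_int P" and "alpha * beta = real_of_int Q"
    and "\<bar>alpha\<bar> \<ge> \<bar>beta\<bar>" and "n \<ge> 1"
  shows "\<bar>alpha\<bar> > 1 \<and> \<bar>alpha\<bar> powi (int n - 1 - (if Q > 0 then 0 else 1)) \<le> \<bar>real_of_int (lucasU P Q n)\<bar>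
         \<and> \<bar>real_of_int (lucasU P Q n)\<bar> \<le> \<bar>alpha\<bar> powi (int n - (if Q > 0 then 0 else 1))"
proof -
  have P0: "P \<noteq> 0" and Q0: "Q \<noteq> 0" using assms(1) by auto
  have sq: "(alpha-beta)^2 = of_int (P^2 - 4*Q)"
  proof -
    have "(alpha-beta)^2 = (alpha+beta)^2 - 4*(alpha*beta)" by (simp add: algebra_simps power2_eq_square)
    also have "\<dots> = of_int (P^2 - 4*Q)" using assms(3,4) by simp
    finally show ?thesis .
  qed
  have ne1: "alpha \<noteq> beta"
  proof
    assume "alpha = beta"
    then have "of_int (P^2-4*Q) = (0::real)" using sq by simp
    hence "P^2 - 4*Q = 0" by (simp only: of_int_eq_0_iff)
    with assms(2) show False by simp
  qed
  have ne2: "alpha \<noteq> - beta" using assms(3) P0 by auto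
  have lt: "\<bar>beta\<bar> < \<bar>alpha\<bar>" using assms(5) ne1 ne2 by (auto simp: abs_if split: if_splits)
  have a0: "alpha \<noteq> 0" using lt by auto
  have bin: "real_of_int (lucasU P Q n) * (alpha - beta) = alpha^n - beta^n"
    using lucas_binet[OF assms(3,4)] .
  show ?thesis
  proof (cases "alpha > 0")
    case True
    have "\<bar>beta\<bar> < alpha" using lt True by simp
    from pos_case[OF True this Q0 assms(4,3,2,6) bin] True show ?thesis by simp
  next
    case False
    hence an: "- alpha > 0" using a0 by simp
    have "\<bar>- beta\<bar> < - alpha" using lt an by simp
    moreover have "(- alpha) * (- beta) = of_int Q" using assms(4) by simp
    moreover have "(- alpha) + (- beta) = of_int (- P)" using assms(3) by simp
    moreover have "(- P)^2 - 4*Q > 0" using assms(2) by simp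
    moreover have "((-1)^(n+1) * real_of_int (lucasU P Q n)) * ((- alpha) - (- beta)) = (- alpha)^n - (- beta)^n"
    proof -
      have "((-1)^(n+1) * real_of_int (lucasU P Q n)) * ((- alpha) - (- beta))
          = (-1)^n * (real_of_int (lucasU P Q n) * (alpha - beta))" by (simp add: algebra_simps)
      also have "\<dots> = (-1)^n * alpha^n - (-1)^n * beta^n" by (subst bin) (rule right_diff_distrib)
      also have "\<dots> = (- alpha)^n - (- beta)^n" by (simp add: power_minus[of alpha] power_minus[of beta])
      finally show ?thesis .
    qed
    ultimately have r: "- alpha > 1 \<and> (- alpha) powi (int n - 1 - (if Q > 0 then 0 else 1)) \<le> \<bar>(-1)^(n+1) * real_of_int (lucasU P Q n)\<bar>
         \<and> \<bar>(-1)^(n+1) * real_of_int (lucasU P Q n)\<bar> \<le> (- alpha) powi (int n - (if Q > 0 then 0 else 1))"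
      using pos_case[OF an _ Q0 _ _ _ assms(6)] by blast
    have "\<bar>alpha\<bar> = - alpha" using an by simp
    then show ?thesis using r by (simp add: abs_mult power_abs)
  qed
qed

theorem lemma9:
  fixes P Q :: int and alpha beta :: real and m l :: nat
  assumes "P * Q \<noteq> 0" and "gcd P Q = 1" and "P^2 - 4 * Q > 0"
    and "alpha + beta = real_of_int P" and "alpha * beta = real_of_int Q"
    and "\<bar>alpha\<bar> \<ge> \<bar>beta\<bar>"
    and "\<forall>n::nat. n \<ge> 1 \<longrightarrow> (alpha / beta) ^ n \<noteq> 1"
    and "l \<ge> 1" and "m \<ge> l"
  shows "\<bar>real_of_int (lucasU P Q l) * lucas_binom P Q m l\<bar>
           \<ge> \<bar>alpha\<bar> powi (int l * (int m - int l - 1) - 1)"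
proof -
  define a where "a = \<bar>alpha\<bar>"
  define e :: int where "e = (if Q > 0 then 0 else 1)"
  define u where "u i = \<bar>real_of_int (lucasU P Q i)\<bar>" for i
  have ub: "a > 1 \<and> a powi (int n - 1 - e) \<le> u n \<and> u n \<le> a powi (int n - e)" if "n \<ge> 1" for n
    using U_bounds[OF assms(1,3,4,5,6) that] unfolding a_def e_def u_def by simp
  have a1: "a > 1" using ub[of 1] by simp
  have e1: "0 \<le> e" "e \<le> 1" unfolding e_def by auto
  have pospow: "0 < a powi k" for k using a1 by simp
  have lhs: "\<bar>real_of_int (lucasU P Q l) * lucas_binom P Q m l\<bar>
      = u l * (\<Prod>i<l. u (m-i)) / (\<Prod>i<l. u (Suc i))"
  proof -
    have "{1..l} = {Suc 0..l}" by simp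
    then show ?thesis unfolding lucas_binom_def u_def
      by (simp add: abs_mult my_abs_prod prod.atLeast1_atMost_eq)
  qed
  define A where "A = (\<Sum>i<l. int (m-i) - 1 - e)"
  define B where "B = (\<Sum>i<l. int (Suc i) - e)"
  have N: "a powi A \<le> (\<Prod>i<l. u (m-i))"
  proof -
    have "a powi A = (\<Prod>i<l. a powi (int (m-i) - 1 - e))"
      unfolding A_def using a1 by (simp add: prod_powi)
    also have "\<dots> \<le> (\<Prod>i<l. u (m-i))"
    proof (rule prod_mono)
      fix i assume "i \<in> {..<l}"
      hence "m - i \<ge> 1" using assms(9) by auto
      thus "0 \<le> a powi (int (m-i) - 1 - e) \<and> a powi (int (m-i) - 1 - e) \<le> u (m-i)"
        using ub[of "m-i"] pospow[of "int (m-i) - 1 - e"] by simp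
    qed
    finally show ?thesis .
  qed
  have D: "(\<Prod>i<l. u (Suc i)) \<le> a powi B"
  proof -
    have "(\<Prod>i<l. u (Suc i)) \<le> (\<Prod>i<l. a powi (int (Suc i) - e))"
    proof (rule prod_mono)
      fix i assume "i \<in> {..<l}"
      show "0 \<le> u (Suc i) \<and> u (Suc i) \<le> a powi (int (Suc i) - e)"
        using ub[of "Suc i"] unfolding u_def by simp
    qed
    also have "\<dots> = a powi B"
      unfolding B_def using a1 by (simp add: prod_powi)
    finally show ?thesis .
  qed
  have Dpos: "0 < (\<Prod>i<l. u (Suc i))"
  proof (rule prod_pos)
    fix i assume "i \<in> {..<l}"
    have "a powi (int (Suc i) - 1 - e) \<le> u (Suc i)" using ub[of "Suc i"] by simp
    moreover have "0 < a powi (int (Suc i) - 1 - e)" by (rule pospow)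
    ultimately show "0 < u (Suc i)" by linarith
  qed
  have Ul: "a powi (int l - 1 - e) \<le> u l" using ub[of l] assms(8) by simp
  have Npos: "0 \<le> (\<Prod>i<l. u (m-i))" unfolding u_def by (simp add: prod_nonneg)
  have ulpos: "0 \<le> u l" unfolding u_def by simp
  have AB: "A - B = int l * (int m - 2) - 2 * (\<Sum>i<l. int i)"
  proof -
    have "A - B = (\<Sum>i<l. (int (m-i) - 1 - e) - (int (Suc i) - e))"
      unfolding A_def B_def by (rule sum_subtractf[symmetric])
    also have "\<dots> = (\<Sum>i<l. (int m - 2) - 2 * int i)"
      by (rule sum.cong) (use assms(9) in auto)
    also have "\<dots> = int l * (int m - 2) - 2 * (\<Sum>i<l. int i)"
      by (simp add: sum_subtractf sum_distrib_left)
    finally show ?thesis .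
  qed
  have expo: "int l * (int m - int l - 1) - 1 \<le> (int l - 1 - e) + A - B"
  proof -
    have "int l * (int m - 2) - int l * (int l - 1) = int l * (int m - int l - 1)"
      by (simp add: algebra_simps)
    thus ?thesis using AB gauss_int[of l] e1 assms(8) by linarith
  qed
  have "a powi (int l * (int m - int l - 1) - 1) \<le> a powi ((int l - 1 - e) + A - B)"
    using power_int_increasing[OF expo, of a] a1 by simp
  also have "\<dots> = a powi (int l - 1 - e) * a powi A / a powi B"
    using a1 by (simp add: power_int_add power_int_diff)
  also have "\<dots> \<le> u l * (\<Prod>i<l. u (m-i)) / a powi B"
    by (rule divide_right_mono[OF mult_mono[OF Ul N]]) (use ulpos pospow in \<open>auto intro: less_imp_le\<close>)
  also have "\<dots> \<le> u l * (\<Prod>i<l. u (m-i)) / (\<Prod>i<l. u (Suc i))"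
    by (rule divide_left_mono[OF D]) (use ulpos Npos Dpos pospow in auto)
  finally show ?thesis using lhs unfolding a_def by simp
qed

end
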